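(* Let $O$ be a Hermitian observable with $\|O\|\le1$, and let $\mathcal M$ be the GQPE measurement (with $\kappa=1$, any positive integer $m$ and $\gamma>0$). For any quantum state $\rho$, let $Z$ be the raw readout of applying $\mathcal M$ to $\rho$, and let $Z'$ be the raw readout of applying $\mathcal M$ again to the resulting post-measurement state. Then $|\mathrm{Cov}(Z,Z')|\le\mathbb V[Z]$.
   Context: GQPE measurement: $N=2^{2m}$, $h=2^{-m}$, $\omega_j=(j-N/2)h$ ($j=0,\dots,N-1$), $\xi_\ell=(\ell-N/2)h$, $\widehat g_\gamma(\xi)=(2\sqrt{2\pi}\gamma)^{1/2}e^{-4\pi^2\gamma^2\xi^2}$, $C=(h\sum_{\ell=1}^{N-1}\widehat g_\gamma(\xi_\ell)^2)^{1/2}$, $\tilde O=O/\kappa$, Kraus operators $O_j=\frac{h^{3/2}}{C}\sum_{\ell=1}^{N-1}e^{2\pi i\xi_\ell(\omega_jI-\tilde O)}\widehat g_\gamma(\xi_\ell)$. Applied to $\rho$, index $j$ occurs with probability $\operatorname{tr}(O_j\rho O_j^\dagger)$, post-state $O_j\rho O_j^\dagger/\operatorname{tr}(O_j\rho O_j^\dagger)$, and the raw readout is $Z=\omega_j$ if $|\omega_j|\le2$, else $Z=0$. $\mathrm{Cov}(Z,Z')=\mathbb E[ZZ']-\mathbb E[Z]\mathbb E[Z']$ over the joint distribution of the two successive measurements. *)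

theory Defs
  imports "HOL-Analysis.Analysis" "Jordan_Normal_Form.Matrix"
begin

definition ctrace :: "complex mat \<Rightarrow> complex" where
  "ctrace A = (\<Sum>i<dim_row A. A $$ (i, i))"

definition dagger :: "complex mat \<Rightarrow> complex mat" where
  "dagger A = mat (dim_col A) (dim_row A) (\<lambda>(i, j). cnj (A $$ (j, i)))"

definition hermitian_mat :: "nat \<Rightarrow> complex mat \<Rightarrow> bool" where
  "hermitian_mat n A \<longleftrightarrow> A \<in> carrier_mat n n \<and> dagger A = A"

definition vnorm :: "complex vec \<Rightarrow> real" where
  "vnorm v = sqrt (\<Sum>i<dim_vec v. (cmod (v $ i))\<^sup>2)"

definition opnorm_le :: "nat \<Rightarrow> complex mat \<Rightarrow> real \<Rightarrow> bool" where
  "opnorm_le n A c \<longleftrightarrow> (\<forall>v \<in> carrier_vec n. vnorm (A *\<^sub>v v) \<le> c * vnorm v)"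

definition density_mat :: "nat \<Rightarrow> complex mat \<Rightarrow> bool" where
  "density_mat n \<rho> \<longleftrightarrow> hermitian_mat n \<rho>
     \<and> (\<forall>v \<in> carrier_vec n. 0 \<le> Re (\<Sum>i<n. \<Sum>j<n. cnj (v $ i) * \<rho> $$ (i, j) * v $ j))
     \<and> ctrace \<rho> = 1"

definition mexp :: "complex mat \<Rightarrow> complex mat" where
  "mexp A = mat (dim_row A) (dim_col A)
     (\<lambda>(i, j). (\<Sum>k. (A ^\<^sub>m k) $$ (i, j) / of_nat (fact k)))"

definition gN :: "nat \<Rightarrow> nat" where "gN m = 2 ^ (2 * m)"
definition gh :: "nat \<Rightarrow> real" where "gh m = 1 / 2 ^ m"
definition omega :: "nat \<Rightarrow> nat \<Rightarrow> real" where
  "omega m j = (real j - real (gN m) / 2) * gh m"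
definition xi :: "nat \<Rightarrow> nat \<Rightarrow> real" where
  "xi m l = (real l - real (gN m) / 2) * gh m"
definition ghat :: "real \<Rightarrow> real \<Rightarrow> real" where
  "ghat \<gamma> x = sqrt (2 * sqrt (2 * pi) * \<gamma>) * exp (- 4 * pi\<^sup>2 * \<gamma>\<^sup>2 * x\<^sup>2)"
definition gC :: "nat \<Rightarrow> real \<Rightarrow> real" where
  "gC m \<gamma> = sqrt (gh m * (\<Sum>l\<in>{1..<gN m}. (ghat \<gamma> (xi m l))\<^sup>2))"

definition kraus :: "nat \<Rightarrow> complex mat \<Rightarrow> real \<Rightarrow> nat \<Rightarrow> real \<Rightarrow> nat \<Rightarrow> complex mat" where
  "kraus n Obs \<kappa> m \<gamma> j = mat n n (\<lambda>(a, b).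
     complex_of_real (gh m powr (3/2) / gC m \<gamma>) *
     (\<Sum>l\<in>{1..<gN m}.
        complex_of_real (ghat \<gamma> (xi m l)) *
        mexp ((2 * pi * \<i> * complex_of_real (xi m l)) \<cdot>\<^sub>m
              (complex_of_real (omega m j) \<cdot>\<^sub>m 1\<^sub>m n + (- complex_of_real (1 / \<kappa>)) \<cdot>\<^sub>m Obs)) $$ (a, b)))"

definition outcome_prob :: "complex mat \<Rightarrow> complex mat \<Rightarrow> real" where
  "outcome_prob K \<rho> = Re (ctrace (K * \<rho> * dagger K))"

definition post_state :: "complex mat \<Rightarrow> complex mat \<Rightarrow> complex mat" where
  "post_state K \<rho> = complex_of_real (1 / outcome_prob K \<rho>) \<cdot>\<^sub>m (K * \<rho> * dagger K)"

definition readout :: "nat \<Rightarrow> nat \<Rightarrow> real" where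
  "readout m j = (if \<bar>omega m j\<bar> \<le> 2 then omega m j else 0)"

definition p1 :: "nat \<Rightarrow> complex mat \<Rightarrow> real \<Rightarrow> nat \<Rightarrow> real \<Rightarrow> complex mat \<Rightarrow> nat \<Rightarrow> real" where
  "p1 n Obs \<kappa> m \<gamma> \<rho> j = outcome_prob (kraus n Obs \<kappa> m \<gamma> j) \<rho>"

definition p12 :: "nat \<Rightarrow> complex mat \<Rightarrow> real \<Rightarrow> nat \<Rightarrow> real \<Rightarrow> complex mat \<Rightarrow> nat \<Rightarrow> nat \<Rightarrow> real" where
  "p12 n Obs \<kappa> m \<gamma> \<rho> j k = p1 n Obs \<kappa> m \<gamma> \<rho> j *
     outcome_prob (kraus n Obs \<kappa> m \<gamma> k) (post_state (kraus n Obs \<kappa> m \<gamma> j) \<rho>)"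

definition EZ :: "nat \<Rightarrow> complex mat \<Rightarrow> real \<Rightarrow> nat \<Rightarrow> real \<Rightarrow> complex mat \<Rightarrow> real" where
  "EZ n Obs \<kappa> m \<gamma> \<rho> = (\<Sum>j<gN m. p1 n Obs \<kappa> m \<gamma> \<rho> j * readout m j)"

definition VZ :: "nat \<Rightarrow> complex mat \<Rightarrow> real \<Rightarrow> nat \<Rightarrow> real \<Rightarrow> complex mat \<Rightarrow> real" where
  "VZ n Obs \<kappa> m \<gamma> \<rho> = (\<Sum>j<gN m. p1 n Obs \<kappa> m \<gamma> \<rho> j * (readout m j)\<^sup>2) - (EZ n Obs \<kappa> m \<gamma> \<rho>)\<^sup>2"

definition EZ' :: "nat \<Rightarrow> complex mat \<Rightarrow> real \<Rightarrow> nat \<Rightarrow> real \<Rightarrow> complex mat \<Rightarrow> real" where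
  "EZ' n Obs \<kappa> m \<gamma> \<rho> = (\<Sum>j<gN m. \<Sum>k<gN m. p12 n Obs \<kappa> m \<gamma> \<rho> j k * readout m k)"

definition EZZ' :: "nat \<Rightarrow> complex mat \<Rightarrow> real \<Rightarrow> nat \<Rightarrow> real \<Rightarrow> complex mat \<Rightarrow> real" where
  "EZZ' n Obs \<kappa> m \<gamma> \<rho> = (\<Sum>j<gN m. \<Sum>k<gN m. p12 n Obs \<kappa> m \<gamma> \<rho> j k * readout m j * readout m k)"

definition CovZZ' :: "nat \<Rightarrow> complex mat \<Rightarrow> real \<Rightarrow> nat \<Rightarrow> real \<Rightarrow> complex mat \<Rightarrow> real" where
  "CovZZ' n Obs \<kappa> m \<gamma> \<rho> = EZZ' n Obs \<kappa> m \<gamma> \<rho> - EZ n Obs \<kappa> m \<gamma> \<rho> * EZ' n Obs \<kappa> m \<gamma> \<rho>"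

end

theory Submission
  imports Defs
begin

lemma mult_idx:
  assumes "A \<in> carrier_mat n m" "B \<in> carrier_mat m k" "i < n" "j < k"
  shows "(A * B) $$ (i,j) = (\<Sum>l<m. A $$ (i,l) * B $$ (l,j))"
  using assms by (auto simp: scalar_prod_def atLeast0LessThan intro!: sum.cong)

lemma dagger_dim[simp]: "dim_row (dagger A) = dim_col A" "dim_col (dagger A) = dim_row A"
  by (auto simp: dagger_def)

lemma dagger_carrier[simp]: "A \<in> carrier_mat n m \<Longrightarrow> dagger A \<in> carrier_mat m n"
  by (auto simp: dagger_def)

lemma dagger_idx[simp]: "i < dim_col A \<Longrightarrow> j < dim_row A \<Longrightarrow> dagger A $$ (i,j) = cnj (A $$ (j,i))"
  by (auto simp: dagger_def)

lemma dagger_dagger[simp]: "dagger (dagger A) = A"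
  by (rule eq_matI) auto

lemma dagger_mult:
  assumes "A \<in> carrier_mat n m" "B \<in> carrier_mat m k"
  shows "dagger (A * B) = dagger B * dagger A"
proof (rule eq_matI)
  fix i j assume ij: "i < dim_row (dagger B * dagger A)" "j < dim_col (dagger B * dagger A)"
  then have i: "i < k" and j: "j < n" using assms by auto
  have "dagger (A * B) $$ (i,j) = cnj ((A*B) $$ (j,i))" using i j assms by simp
  also have "\<dots> = (\<Sum>l<m. cnj (A $$ (j,l)) * cnj (B $$ (l,i)))"
    using mult_idx[OF assms j i] by (simp add: cnj_sum)
  also have "\<dots> = (dagger B * dagger A) $$ (i,j)"
    using assms i j by (subst mult_idx[of _ k m _ n]) (auto simp: mult.commute intro!: sum.cong)
  finally show "dagger (A * B) $$ (i,j) = (dagger B * dagger A) $$ (i,j)" .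
qed (use assms in auto)

lemma dagger_smult: "dagger (c \<cdot>\<^sub>m A) = cnj c \<cdot>\<^sub>m dagger A"
  by (rule eq_matI) auto

lemma dagger_one[simp]: "dagger (1\<^sub>m n) = 1\<^sub>m n"
  by (rule eq_matI) auto

lemma pow_mat_Suc_left:
  assumes "A \<in> carrier_mat n n"
  shows "A ^\<^sub>m Suc k = A * A ^\<^sub>m k"
proof (induction k)
  case 0 then show ?case using assms by simp
next
  case (Suc k)
  have "A ^\<^sub>m Suc (Suc k) = (A * A ^\<^sub>m k) * A" using Suc by simp
  also have "\<dots> = A * (A ^\<^sub>m k * A)" using assms by (subst assoc_mult_mat[of _ n n _ n _ n]) auto
  finally show ?case by simp
qed

lemma pow_mat_add:
  assumes "A \<in> carrier_mat n n"
  shows "A ^\<^sub>m p * A ^\<^sub>m q = A ^\<^sub>m (p + q)"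
proof (induction q)
  case 0 then show ?case using assms by simp
next
  case (Suc q)
  have "A ^\<^sub>m p * A ^\<^sub>m Suc q = A ^\<^sub>m p * (A ^\<^sub>m q * A)"
    by simp
  also have "\<dots> = (A ^\<^sub>m p * A ^\<^sub>m q) * A"
    using assms by (subst assoc_mult_mat[of _ n n _ n _ n]) auto
  finally show ?case using Suc by simp
qed

lemma dagger_pow:
  assumes "A \<in> carrier_mat n n"
  shows "dagger (A ^\<^sub>m k) = (dagger A) ^\<^sub>m k"
proof (induction k)
  case 0 then show ?case using assms by simp
next
  case (Suc k)
  have "dagger (A ^\<^sub>m Suc k) = dagger A * dagger (A ^\<^sub>m k)"
    using assms by (simp add: dagger_mult[of _ n n _ n])
  also have "\<dots> = dagger A ^\<^sub>m Suc k"
    using Suc pow_mat_Suc_left[of "dagger A" n k] assms by simp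
  finally show ?case .
qed

lemma pow_smult:
  fixes c :: complex
  assumes "A \<in> carrier_mat n n"
  shows "(c \<cdot>\<^sub>m A) ^\<^sub>m k = (c ^ k) \<cdot>\<^sub>m (A ^\<^sub>m k)"
proof (induction k)
  case 0 then show ?case using assms by (intro eq_matI) auto
next
  case (Suc k)
  have "(c \<cdot>\<^sub>m A) ^\<^sub>m Suc k = ((c ^ k) \<cdot>\<^sub>m (A ^\<^sub>m k)) * (c \<cdot>\<^sub>m A)" using Suc by simp
  also have "\<dots> = (c ^ Suc k) \<cdot>\<^sub>m (A ^\<^sub>m Suc k)"
  proof (rule eq_matI)
    fix i j assume "i < dim_row ((c ^ Suc k) \<cdot>\<^sub>m (A ^\<^sub>m Suc k))" "j < dim_col ((c ^ Suc k) \<cdot>\<^sub>m (A ^\<^sub>m Suc k))"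
    then have ij: "i < n" "j < n" using assms by auto
    have "(((c ^ k) \<cdot>\<^sub>m (A ^\<^sub>m k)) * (c \<cdot>\<^sub>m A)) $$ (i,j) = (\<Sum>l<n. (c ^ k * (A ^\<^sub>m k) $$ (i,l)) * (c * A $$ (l,j)))"
      using assms ij by (subst mult_idx[of _ n n _ n]) auto
    also have "\<dots> = c ^ Suc k * (\<Sum>l<n. (A ^\<^sub>m k) $$ (i,l) * A $$ (l,j))"
      by (auto simp: sum_distrib_left mult_ac intro!: sum.cong)
    also have "\<dots> = ((c ^ Suc k) \<cdot>\<^sub>m (A ^\<^sub>m Suc k)) $$ (i,j)"
      using assms ij by (simp del: index_mult_mat add: index_mult_mat(2,3) mult_idx[of _ n n _ n])
    finally show "(((c ^ k) \<cdot>\<^sub>m (A ^\<^sub>m k)) * (c \<cdot>\<^sub>m A)) $$ (i,j) = ((c ^ Suc k) \<cdot>\<^sub>m (A ^\<^sub>m Suc k)) $$ (i,j)" .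
  qed (use assms in auto)
  finally show ?case .
qed

lemma pow_one_mat: "(1\<^sub>m n :: complex mat) ^\<^sub>m k = 1\<^sub>m n"
  by (induction k) auto

lemma pow_entry_bound:
  fixes A :: "complex mat"
  assumes A: "A \<in> carrier_mat n n" and a: "a < n" and b: "b < n"
  shows "cmod ((A ^\<^sub>m k) $$ (a,b)) \<le> (\<Sum>i<n. \<Sum>j<n. cmod (A $$ (i,j))) ^ k"
  using a b
proof (induction k arbitrary: a b)
  case 0 then show ?case using A by auto
next
  case (Suc k)
  define c where "c = (\<Sum>i<n. \<Sum>j<n. cmod (A $$ (i,j)))"
  have c0: "0 \<le> c" unfolding c_def by (intro sum_nonneg) auto
  have "cmod ((A ^\<^sub>m Suc k) $$ (a,b)) = cmod (\<Sum>l<n. (A ^\<^sub>m k) $$ (a,l) * A $$ (l,b))"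
    using A Suc.prems by (simp del: index_mult_mat add: index_mult_mat(2,3) mult_idx[of _ n n _ n])
  also have "\<dots> \<le> (\<Sum>l<n. cmod ((A ^\<^sub>m k) $$ (a,l)) * cmod (A $$ (l,b)))"
    by (rule order_trans[OF norm_sum]) (simp add: norm_mult)
  also have "\<dots> \<le> (\<Sum>l<n. c ^ k * cmod (A $$ (l,b)))"
    using Suc.IH Suc.prems unfolding c_def by (intro sum_mono mult_right_mono) auto
  also have "\<dots> = c ^ k * (\<Sum>l<n. cmod (A $$ (l,b)))" by (simp add: sum_distrib_left)
  also have "\<dots> \<le> c ^ k * c"
  proof (intro mult_left_mono)
    show "(\<Sum>l<n. cmod (A $$ (l,b))) \<le> c" unfolding c_def
      using Suc.prems by (intro sum_mono member_le_sum) auto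
  qed (use c0 in auto)
  finally show ?case unfolding c_def by (simp add: mult.commute)
qed

lemma mexp_summable:
  fixes A :: "complex mat"
  assumes A: "A \<in> carrier_mat n n" and a: "a < n" and b: "b < n"
  shows "summable (\<lambda>k. norm ((A ^\<^sub>m k) $$ (a,b) / of_nat (fact k)))"
proof (rule summable_comparison_test)
  define c where "c = (\<Sum>i<n. \<Sum>j<n. cmod (A $$ (i,j)))"
  show "summable (\<lambda>k. inverse (fact k) * c ^ k)" by (rule summable_exp)
  show "\<exists>N. \<forall>k\<ge>N. norm (norm ((A ^\<^sub>m k) $$ (a,b) / of_nat (fact k))) \<le> inverse (fact k) * c ^ k"
    using pow_entry_bound[OF A a b] unfolding c_def
    by (auto simp: norm_divide divide_simps)
qed

lemma mexp_idx:
  "a < dim_row A \<Longrightarrow> b < dim_col A \<Longrightarrow> mexp A $$ (a,b) = (\<Sum>k. (A ^\<^sub>m k) $$ (a,b) / of_nat (fact k))"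
  by (simp add: mexp_def)

lemma mexp_carrier[simp]: "A \<in> carrier_mat n n \<Longrightarrow> mexp A \<in> carrier_mat n n"
  by (simp add: mexp_def)

lemma mexp_dim[simp]: "dim_row (mexp A) = dim_row A" "dim_col (mexp A) = dim_col A"
  by (auto simp: mexp_def)

lemma smult_smult_mat': "a \<cdot>\<^sub>m (b \<cdot>\<^sub>m A) = (a * b :: 'a :: semigroup_mult) \<cdot>\<^sub>m A"
  by (rule eq_matI) (auto simp: mult.assoc)

lemma mexp_mult:
  fixes X Y :: "complex mat"
  assumes X: "X \<in> carrier_mat n n" and Y: "Y \<in> carrier_mat n n"
  and bin: "\<And>k a b. a < n \<Longrightarrow> b < n \<Longrightarrow> ((X + Y) ^\<^sub>m k) $$ (a,b) = (\<Sum>p\<le>k. of_nat (k choose p) * (X ^\<^sub>m p * Y ^\<^sub>m (k - p)) $$ (a,b))"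
  shows "mexp X * mexp Y = mexp (X + Y)"
proof (rule eq_matI)
  fix a b assume "a < dim_row (mexp (X+Y))" "b < dim_col (mexp (X+Y))"
  then have a: "a < n" and b: "b < n" using X Y by (auto simp: mexp_def)
  define x where "x = (\<lambda>l k. (X ^\<^sub>m k) $$ (a,l) / of_nat (fact k))"
  define y where "y = (\<lambda>l k. (Y ^\<^sub>m k) $$ (l,b) / of_nat (fact k))"
  have sx: "summable (\<lambda>k. norm (x l k))" if "l < n" for l
    unfolding x_def using mexp_summable[OF X a that] .
  have sy: "summable (\<lambda>k. norm (y l k))" if "l < n" for l
    unfolding y_def using mexp_summable[OF Y that b] .
  have "(mexp X * mexp Y) $$ (a,b) = (\<Sum>l<n. (\<Sum>k. x l k) * (\<Sum>k. y l k))"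
    using X Y a b by (subst mult_idx[of _ n n _ n]) (auto simp: mexp_idx x_def y_def)
  also have "\<dots> = (\<Sum>l<n. \<Sum>k. \<Sum>p\<le>k. x l p * y l (k - p))"
    using sx sy by (intro sum.cong refl Cauchy_product) auto
  also have "\<dots> = (\<Sum>k. \<Sum>l<n. \<Sum>p\<le>k. x l p * y l (k - p))"
    using sx sy by (intro suminf_sum[symmetric] summable_Cauchy_product) auto
  also have "\<dots> = (\<Sum>k. ((X + Y) ^\<^sub>m k) $$ (a,b) / of_nat (fact k))"
  proof (intro suminf_cong)
    fix k
    have "(\<Sum>l<n. \<Sum>p\<le>k. x l p * y l (k - p)) = (\<Sum>p\<le>k. (\<Sum>l<n. (X ^\<^sub>m p) $$ (a,l) * (Y ^\<^sub>m (k-p)) $$ (l,b)) / (of_nat (fact p) * of_nat (fact (k-p))))"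
      unfolding x_def y_def by (subst sum.swap) (auto simp: sum_divide_distrib intro!: sum.cong)
    also have "\<dots> = (\<Sum>p\<le>k. of_nat (k choose p) * (X ^\<^sub>m p * Y ^\<^sub>m (k - p)) $$ (a,b) / of_nat (fact k))"
    proof (intro sum.cong refl)
      fix p assume "p \<in> {..k}"
      then have pk: "p \<le> k" by auto
      have bf: "(of_nat (k choose p) :: complex) = fact k / (fact p * fact (k-p))" by (rule binomial_fact[OF pk])
      show "(\<Sum>l<n. (X ^\<^sub>m p) $$ (a,l) * (Y ^\<^sub>m (k-p)) $$ (l,b)) / (of_nat (fact p) * of_nat (fact (k-p)))
         = of_nat (k choose p) * (X ^\<^sub>m p * Y ^\<^sub>m (k - p)) $$ (a,b) / of_nat (fact k)"
        using X Y a b unfolding bf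
        by (simp del: index_mult_mat add: index_mult_mat(2,3) mult_idx[of _ n n _ n])
    qed
    also have "\<dots> = ((X + Y) ^\<^sub>m k) $$ (a,b) / of_nat (fact k)"
      using bin[OF a b] by (simp add: sum_divide_distrib)
    finally show "(\<Sum>l<n. \<Sum>p\<le>k. x l p * y l (k - p)) = ((X + Y) ^\<^sub>m k) $$ (a,b) / of_nat (fact k)" .
  qed
  also have "\<dots> = mexp (X+Y) $$ (a,b)" using X Y a b by (simp add: mexp_idx)
  finally show "(mexp X * mexp Y) $$ (a,b) = mexp (X+Y) $$ (a,b)" .
qed (use X Y in \<open>auto simp: mexp_def\<close>)

lemma umbral_step:
  fixes t :: "nat \<Rightarrow> complex"
  shows "(\<Sum>p\<le>Suc k. of_nat (Suc k choose p) * \<alpha> ^ p * t (Suc k - p)) =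
     \<alpha> * (\<Sum>p\<le>k. of_nat (k choose p) * \<alpha> ^ p * t (k - p)) + (\<Sum>p\<le>k. of_nat (k choose p) * \<alpha> ^ p * t (Suc (k - p)))"
proof -
  have A: "(\<Sum>p\<le>Suc k. of_nat (Suc k choose p) * \<alpha> ^ p * t (Suc k - p)) = t (Suc k) + (\<Sum>p\<le>k. of_nat (k choose p) * \<alpha> ^ Suc p * t (k - p)) + (\<Sum>p\<le>k. of_nat (k choose Suc p) * \<alpha> ^ Suc p * t (k - p))"
    by (subst sum.atMost_Suc_shift) (simp add: sum.distrib distrib_right)
  have B: "(\<Sum>p\<le>k. of_nat (k choose p) * \<alpha> ^ p * t (Suc (k - p))) = (\<Sum>p\<le>Suc k. of_nat (k choose p) * \<alpha> ^ p * t (Suc k - p))"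
    by (auto simp: Suc_diff_le intro!: sum.cong)
  have C: "(\<Sum>p\<le>Suc k. of_nat (k choose p) * \<alpha> ^ p * t (Suc k - p)) = t (Suc k) + (\<Sum>p\<le>k. of_nat (k choose Suc p) * \<alpha> ^ Suc p * t (k - p))"
    by (subst sum.atMost_Suc_shift) simp
  show ?thesis using A B C by (simp add: sum_distrib_left mult_ac)
qed

lemma pow_shift_idx:
  fixes B :: "complex mat"
  assumes B: "B \<in> carrier_mat n n" and a: "a < n" and b: "b < n"
  shows "((\<alpha> \<cdot>\<^sub>m 1\<^sub>m n + B) ^\<^sub>m k) $$ (a,b) = (\<Sum>p\<le>k. of_nat (k choose p) * \<alpha> ^ p * (B ^\<^sub>m (k - p)) $$ (a,b))"
  using a b
proof (induction k arbitrary: a b)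
  case 0 then show ?case using B by simp
next
  case (Suc k)
  let ?M = "\<alpha> \<cdot>\<^sub>m 1\<^sub>m n + B"
  have M: "?M \<in> carrier_mat n n" using B by simp
  have "(?M ^\<^sub>m Suc k) $$ (a,b) = (\<Sum>l<n. (?M ^\<^sub>m k) $$ (a,l) * ?M $$ (l,b))"
    using M Suc.prems by (simp del: index_mult_mat add: index_mult_mat(2,3) mult_idx[of _ n n _ n])
  also have "\<dots> = (\<Sum>l<n. (?M ^\<^sub>m k) $$ (a,l) * (\<alpha> * (if l = b then 1 else 0))) + (\<Sum>l<n. (?M ^\<^sub>m k) $$ (a,l) * B $$ (l,b))"
    using B Suc.prems by (simp add: distrib_left sum.distrib)
  also have "(\<Sum>l<n. (?M ^\<^sub>m k) $$ (a,l) * (\<alpha> * (if l = b then 1 else 0))) = (\<Sum>l<n. if l = b then \<alpha> * (?M ^\<^sub>m k) $$ (a,l) else 0)"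
    by (rule sum.cong) auto
  also have "\<dots> = \<alpha> * (?M ^\<^sub>m k) $$ (a,b)"
    using Suc.prems by simp
  also have "(\<Sum>l<n. (?M ^\<^sub>m k) $$ (a,l) * B $$ (l,b)) = (\<Sum>l<n. \<Sum>p\<le>k. of_nat (k choose p) * \<alpha> ^ p * ((B ^\<^sub>m (k - p)) $$ (a,l) * B $$ (l,b)))"
    using Suc.IH Suc.prems by (auto simp: sum_distrib_left sum_distrib_right mult_ac intro!: sum.cong)
  also have "\<dots> = (\<Sum>p\<le>k. of_nat (k choose p) * \<alpha> ^ p * (B ^\<^sub>m (Suc (k - p))) $$ (a,b))"
    using B Suc.prems by (subst sum.swap) (simp del: index_mult_mat add: index_mult_mat(2,3) mult_idx[of _ n n _ n] sum_distrib_left)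
  finally show ?case using Suc.IH[OF Suc.prems] umbral_step[of k \<alpha> "\<lambda>q. (B ^\<^sub>m q) $$ (a,b)"] by simp
qed

lemma exp_sums': "(\<lambda>k. \<alpha> ^ k / of_nat (fact k)) sums exp (\<alpha>::complex)"
  using exp_converges[of \<alpha>] by (simp add: scaleR_conv_of_real divide_inverse mult.commute)

lemma mexp_scalar:
  "mexp (\<alpha> \<cdot>\<^sub>m 1\<^sub>m n) = exp \<alpha> \<cdot>\<^sub>m 1\<^sub>m n"
proof (rule eq_matI)
  fix a b assume ab: "a < dim_row (exp \<alpha> \<cdot>\<^sub>m 1\<^sub>m n)" "b < dim_col (exp \<alpha> \<cdot>\<^sub>m 1\<^sub>m n)"
  then have a: "a < n" and b: "b < n" by auto
  have "mexp (\<alpha> \<cdot>\<^sub>m 1\<^sub>m n) $$ (a,b) = (\<Sum>k. (if a = b then \<alpha> ^ k / of_nat (fact k) else 0))"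
    using a b by (simp add: mexp_idx pow_smult[of "1\<^sub>m n" n] pow_one_mat)
  also have "\<dots> = (exp \<alpha> \<cdot>\<^sub>m 1\<^sub>m n) $$ (a,b)"
    using a b exp_sums'[of \<alpha>] by (auto simp: sums_iff)
  finally show "mexp (\<alpha> \<cdot>\<^sub>m 1\<^sub>m n) $$ (a,b) = (exp \<alpha> \<cdot>\<^sub>m 1\<^sub>m n) $$ (a,b)" .
qed (auto simp: mexp_def)

lemma mexp_shift:
  fixes B :: "complex mat"
  assumes B: "B \<in> carrier_mat n n"
  shows "mexp (\<alpha> \<cdot>\<^sub>m 1\<^sub>m n + B) = exp \<alpha> \<cdot>\<^sub>m mexp B"
proof -
  have "mexp (\<alpha> \<cdot>\<^sub>m 1\<^sub>m n) * mexp B = mexp (\<alpha> \<cdot>\<^sub>m 1\<^sub>m n + B)"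
  proof (rule mexp_mult[of _ n])
    fix k a b assume a: "a < n" and b: "b < n"
    have "((\<alpha> \<cdot>\<^sub>m 1\<^sub>m n) ^\<^sub>m p * B ^\<^sub>m (k - p)) $$ (a,b) = \<alpha> ^ p * (B ^\<^sub>m (k - p)) $$ (a,b)" for p
      using a b B by (simp add: pow_smult[of "1\<^sub>m n" n] pow_one_mat mult_smult_assoc_mat[of _ n n _ n])
    then show "((\<alpha> \<cdot>\<^sub>m 1\<^sub>m n + B) ^\<^sub>m k) $$ (a,b) = (\<Sum>p\<le>k. of_nat (k choose p) * ((\<alpha> \<cdot>\<^sub>m 1\<^sub>m n) ^\<^sub>m p * B ^\<^sub>m (k - p)) $$ (a,b))"
      using pow_shift_idx[OF B a b] by (simp add: mult.assoc)
  qed (use B in auto)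
  then show ?thesis
    using B by (simp add: mexp_scalar mult_smult_assoc_mat[of _ n n _ n] left_mult_one_mat[OF mexp_carrier[OF B]])
qed

lemma summable_cnj_suminf:
  fixes f :: "nat \<Rightarrow> complex"
  assumes "summable f"
  shows "cnj (suminf f) = (\<Sum>k. cnj (f k))"
  using assms sums_cnj[of f "suminf f"] by (simp add: summable_sums sums_unique)

lemma dagger_mexp:
  fixes M :: "complex mat"
  assumes M: "M \<in> carrier_mat n n"
  shows "dagger (mexp M) = mexp (dagger M)"
proof (rule eq_matI)
  fix i j assume "i < dim_row (mexp (dagger M))" "j < dim_col (mexp (dagger M))"
  then have i: "i < n" and j: "j < n" using M by (auto simp: mexp_def)
  have s: "summable (\<lambda>k. (M ^\<^sub>m k) $$ (j,i) / of_nat (fact k))"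
    using mexp_summable[OF M j i] by (rule summable_norm_cancel)
  have "dagger (mexp M) $$ (i,j) = cnj (\<Sum>k. (M ^\<^sub>m k) $$ (j,i) / of_nat (fact k))"
    using M i j by (simp add: mexp_idx)
  also have "\<dots> = (\<Sum>k. cnj ((M ^\<^sub>m k) $$ (j,i)) / of_nat (fact k))"
    using summable_cnj_suminf[OF s] by simp
  also have "\<dots> = (\<Sum>k. (dagger M ^\<^sub>m k) $$ (i,j) / of_nat (fact k))"
  proof (intro suminf_cong)
    fix k
    have "cnj ((M ^\<^sub>m k) $$ (j,i)) = dagger (M ^\<^sub>m k) $$ (i,j)" using M i j by simp
    then show "cnj ((M ^\<^sub>m k) $$ (j,i)) / of_nat (fact k) = (dagger M ^\<^sub>m k) $$ (i,j) / of_nat (fact k)"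
      using dagger_pow[OF M, of k] by simp
  qed
  also have "\<dots> = mexp (dagger M) $$ (i,j)" using M i j by (simp add: mexp_idx)
  finally show "dagger (mexp M) $$ (i,j) = mexp (dagger M) $$ (i,j)" .
qed (use M in \<open>auto simp: mexp_def\<close>)

definition Eop :: "complex mat \<Rightarrow> complex \<Rightarrow> complex mat" where
  "Eop Ob \<beta> = mexp (\<beta> \<cdot>\<^sub>m Ob)"

lemma Eop_carrier[simp]: "Ob \<in> carrier_mat n n \<Longrightarrow> Eop Ob \<beta> \<in> carrier_mat n n"
  by (simp add: Eop_def)

lemma Eop_mult:
  assumes Ob: "Ob \<in> carrier_mat n n"
  shows "Eop Ob \<beta> * Eop Ob \<gamma> = Eop Ob (\<beta> + \<gamma>)"
proof -
  have sum: "\<beta> \<cdot>\<^sub>m Ob + \<gamma> \<cdot>\<^sub>m Ob = (\<beta> + \<gamma>) \<cdot>\<^sub>m Ob"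
    using Ob by (intro eq_matI) (auto simp: distrib_right)
  have "mexp (\<beta> \<cdot>\<^sub>m Ob) * mexp (\<gamma> \<cdot>\<^sub>m Ob) = mexp (\<beta> \<cdot>\<^sub>m Ob + \<gamma> \<cdot>\<^sub>m Ob)"
  proof (rule mexp_mult[of _ n])
    fix k a b assume a: "a < n" and b: "b < n"
    have "((\<beta> \<cdot>\<^sub>m Ob) ^\<^sub>m p * (\<gamma> \<cdot>\<^sub>m Ob) ^\<^sub>m (k - p)) $$ (a,b) = \<beta> ^ p * \<gamma> ^ (k - p) * (Ob ^\<^sub>m k) $$ (a,b)" if "p \<le> k" for p
    proof -
      have "(\<beta> \<cdot>\<^sub>m Ob) ^\<^sub>m p * (\<gamma> \<cdot>\<^sub>m Ob) ^\<^sub>m (k - p) = (\<beta> ^ p * \<gamma> ^ (k - p)) \<cdot>\<^sub>m (Ob ^\<^sub>m p * Ob ^\<^sub>m (k - p))"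
        using Ob by (simp add: pow_smult[OF Ob] mult_smult_assoc_mat[of _ n n _ n] mult_smult_distrib[of _ n n _ n] smult_smult_mat' mult.commute)
      also have "\<dots> = (\<beta> ^ p * \<gamma> ^ (k - p)) \<cdot>\<^sub>m (Ob ^\<^sub>m k)"
        using pow_mat_add[OF Ob, of p "k - p"] that by simp
      finally show ?thesis using a b Ob by simp
    qed
    then have "(\<Sum>p\<le>k. of_nat (k choose p) * ((\<beta> \<cdot>\<^sub>m Ob) ^\<^sub>m p * (\<gamma> \<cdot>\<^sub>m Ob) ^\<^sub>m (k - p)) $$ (a,b))
       = (\<Sum>p\<le>k. of_nat (k choose p) * \<beta> ^ p * \<gamma> ^ (k - p)) * (Ob ^\<^sub>m k) $$ (a,b)"
      by (simp add: sum_distrib_right mult.assoc)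
    also have "\<dots> = ((\<beta> \<cdot>\<^sub>m Ob + \<gamma> \<cdot>\<^sub>m Ob) ^\<^sub>m k) $$ (a,b)"
      unfolding sum binomial_ring[symmetric] using Ob a b by (simp add: pow_smult[OF Ob])
    finally show "((\<beta> \<cdot>\<^sub>m Ob + \<gamma> \<cdot>\<^sub>m Ob) ^\<^sub>m k) $$ (a,b) = (\<Sum>p\<le>k. of_nat (k choose p) * ((\<beta> \<cdot>\<^sub>m Ob) ^\<^sub>m p * (\<gamma> \<cdot>\<^sub>m Ob) ^\<^sub>m (k - p)) $$ (a,b))" by simp
  qed (use Ob in auto)
  then show ?thesis unfolding Eop_def sum .
qed

lemma Eop_dagger:
  assumes Ob: "Ob \<in> carrier_mat n n" and h: "dagger Ob = Ob"
  shows "dagger (Eop Ob \<beta>) = Eop Ob (cnj \<beta>)"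
  unfolding Eop_def using Ob by (simp add: dagger_mexp[of _ n] dagger_smult h)

lemma Eop_zero:
  assumes Ob: "Ob \<in> carrier_mat n n"
  shows "Eop Ob 0 = 1\<^sub>m n"
proof (rule eq_matI)
  fix a b assume "a < dim_row (1\<^sub>m n)" "b < dim_col (1\<^sub>m n)"
  then have a: "a < n" and b: "b < n" by auto
  have t: "(0 ^ k * (Ob ^\<^sub>m k) $$ (a,b)) / of_nat (fact k) = (if k = 0 then (1\<^sub>m n :: complex mat) $$ (a,b) else 0)" for k
    using Ob a b by (cases k) auto
  have "Eop Ob 0 $$ (a,b) = (\<Sum>k. (0 ^ k * (Ob ^\<^sub>m k) $$ (a,b)) / of_nat (fact k))"
    unfolding Eop_def using Ob a b
    by (simp add: mexp_idx pow_smult[OF Ob] del: power_0_left)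
  also have "\<dots> = (\<Sum>k. (if k = 0 then (1\<^sub>m n :: complex mat) $$ (a,b) else 0))"
    unfolding t ..
  also have "\<dots> = 1\<^sub>m n $$ (a,b)"
    using sums_single[of 0 "\<lambda>_. (1\<^sub>m n :: complex mat) $$ (a,b)"] by (simp add: sums_iff)
  finally show "Eop Ob 0 $$ (a,b) = 1\<^sub>m n $$ (a,b)" .
qed (use Ob in \<open>auto simp: Eop_def mexp_def\<close>)

lemma Eop_dim[simp]: "dim_row (Eop Ob \<beta>) = dim_row Ob" "dim_col (Eop Ob \<beta>) = dim_col Ob"
  by (simp_all add: Eop_def)

definition msum :: "nat \<Rightarrow> ('i \<Rightarrow> complex mat) \<Rightarrow> 'i set \<Rightarrow> complex mat" where
  "msum n f I = mat n n (\<lambda>(a,b). \<Sum>i\<in>I. f i $$ (a,b))"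

lemma msum_carrier[simp]: "msum n f I \<in> carrier_mat n n"
  by (simp add: msum_def)
lemma msum_dim[simp]: "dim_row (msum n f I) = n" "dim_col (msum n f I) = n"
  by (simp_all add: msum_def)
lemma msum_idx[simp]: "a < n \<Longrightarrow> b < n \<Longrightarrow> msum n f I $$ (a,b) = (\<Sum>i\<in>I. f i $$ (a,b))"
  by (simp add: msum_def)

definition comb :: "nat \<Rightarrow> complex mat \<Rightarrow> ('i \<Rightarrow> complex) \<Rightarrow> ('i \<Rightarrow> complex) \<Rightarrow> 'i set \<Rightarrow> complex mat" where
  "comb n Ob x \<beta> T = msum n (\<lambda>t. x t \<cdot>\<^sub>m Eop Ob (\<beta> t)) T"

lemma comb_carrier[simp]: "comb n Ob x \<beta> T \<in> carrier_mat n n"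
  by (simp add: comb_def)
lemma comb_dim[simp]: "dim_row (comb n Ob x \<beta> T) = n" "dim_col (comb n Ob x \<beta> T) = n"
  by (simp_all add: comb_def)

lemma comb_idx:
  assumes "Ob \<in> carrier_mat n n" "a < n" "b < n"
  shows "comb n Ob x \<beta> T $$ (a,b) = (\<Sum>t\<in>T. x t * Eop Ob (\<beta> t) $$ (a,b))"
  using assms by (simp add: comb_def)

lemma comb_mult_idx:
  assumes Ob: "Ob \<in> carrier_mat n n" and a: "a < n" and b: "b < n"
  shows "(comb n Ob x \<beta> T * comb n Ob y \<gamma> S) $$ (a,b) = (\<Sum>t\<in>T. \<Sum>s\<in>S. x t * y s * Eop Ob (\<beta> t + \<gamma> s) $$ (a,b))"
proof -
  have "(comb n Ob x \<beta> T * comb n Ob y \<gamma> S) $$ (a,b) = (\<Sum>l<n. (\<Sum>t\<in>T. x t * Eop Ob (\<beta> t) $$ (a,l)) * (\<Sum>s\<in>S. y s * Eop Ob (\<gamma> s) $$ (l,b)))"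
    using Ob a b by (simp del: index_mult_mat add: index_mult_mat(2,3) mult_idx[of _ n n _ n] comb_idx)
  also have "\<dots> = (\<Sum>l<n. \<Sum>t\<in>T. \<Sum>s\<in>S. x t * y s * (Eop Ob (\<beta> t) $$ (a,l) * Eop Ob (\<gamma> s) $$ (l,b)))"
    by (simp add: sum_product mult_ac)
  also have "\<dots> = (\<Sum>t\<in>T. \<Sum>s\<in>S. \<Sum>l<n. x t * y s * (Eop Ob (\<beta> t) $$ (a,l) * Eop Ob (\<gamma> s) $$ (l,b)))"
    by (subst sum.swap) (simp add: sum.swap[of _ "{..<n}"])
  also have "\<dots> = (\<Sum>t\<in>T. \<Sum>s\<in>S. x t * y s * (Eop Ob (\<beta> t) * Eop Ob (\<gamma> s)) $$ (a,b))"
    using Ob a b by (simp del: index_mult_mat add: index_mult_mat(2,3) mult_idx[of _ n n _ n] sum_distrib_left)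
  also have "\<dots> = (\<Sum>t\<in>T. \<Sum>s\<in>S. x t * y s * Eop Ob (\<beta> t + \<gamma> s) $$ (a,b))"
    using Ob by (simp add: Eop_mult[OF Ob])
  finally show ?thesis .
qed

lemma comb_mult:
  assumes Ob: "Ob \<in> carrier_mat n n"
  shows "comb n Ob x \<beta> T * comb n Ob y \<gamma> S = comb n Ob (\<lambda>(t,s). x t * y s) (\<lambda>(t,s). \<beta> t + \<gamma> s) (T \<times> S)"
  by (rule eq_matI) (use Ob in \<open>auto simp del: index_mult_mat simp add: index_mult_mat(2,3) comb_mult_idx comb_idx sum.cartesian_product intro!: sum.cong split: prod.splits\<close>)

lemma comb_comm:
  assumes Ob: "Ob \<in> carrier_mat n n"
  shows "comb n Ob x \<beta> T * comb n Ob y \<gamma> S = comb n Ob y \<gamma> S * comb n Ob x \<beta> T"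
proof (rule eq_matI)
  fix a b assume "a < dim_row (comb n Ob y \<gamma> S * comb n Ob x \<beta> T)" "b < dim_col (comb n Ob y \<gamma> S * comb n Ob x \<beta> T)"
  then have a: "a < n" and b: "b < n" by auto
  show "(comb n Ob x \<beta> T * comb n Ob y \<gamma> S) $$ (a,b) = (comb n Ob y \<gamma> S * comb n Ob x \<beta> T) $$ (a,b)"
    unfolding comb_mult_idx[OF Ob a b] by (subst sum.swap) (simp add: mult_ac add_ac)
qed auto

lemma dagger_comb:
  assumes Ob: "Ob \<in> carrier_mat n n" and h: "dagger Ob = Ob"
  shows "dagger (comb n Ob x \<beta> T) = comb n Ob (\<lambda>t. cnj (x t)) (\<lambda>t. cnj (\<beta> t)) T"
proof (rule eq_matI)
  fix i j assume "i < dim_row (comb n Ob (\<lambda>t. cnj (x t)) (\<lambda>t. cnj (\<beta> t)) T)" "j < dim_col (comb n Ob (\<lambda>t. cnj (x t)) (\<lambda>t. cnj (\<beta> t)) T)"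
  then have i: "i < n" and j: "j < n" by auto
  have "dagger (Eop Ob (\<beta> t)) $$ (i,j) = Eop Ob (cnj (\<beta> t)) $$ (i,j)" for t
    using Eop_dagger[OF Ob h] by simp
  then have e: "cnj (Eop Ob (\<beta> t) $$ (j,i)) = Eop Ob (cnj (\<beta> t)) $$ (i,j)" for t
    using Ob i j by simp
  show "dagger (comb n Ob x \<beta> T) $$ (i,j) = comb n Ob (\<lambda>t. cnj (x t)) (\<lambda>t. cnj (\<beta> t)) T $$ (i,j)"
    using Ob i j by (simp add: comb_idx cnj_sum e)
qed auto

lemma cis_orth:
  fixes N :: nat and d :: int
  assumes N: "0 < N" and d0: "d \<noteq> 0" and dN: "\<bar>d\<bar> < int N"
  shows "(\<Sum>j<N. cis (2 * pi * real j * real_of_int d / real N)) = 0"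
proof -
  define w where "w = cis (2 * pi * real_of_int d / real N)"
  have pw: "cis (2 * pi * real j * real_of_int d / real N) = w ^ j" for j
  proof -
    have "w ^ j = cis (real j * (2 * pi * real_of_int d / real N))" unfolding w_def by (rule Complex.DeMoivre)
    then show ?thesis by (simp add: field_simps)
  qed
  have wN: "w ^ N = 1"
  proof -
    have "w ^ N = cis (2 * pi * real_of_int d)" unfolding w_def Complex.DeMoivre using N by simp
    also have "\<dots> = 1" by (rule cis_multiple_2pi) simp
    finally show ?thesis .
  qed
  have w1: "w \<noteq> 1"
  proof
    assume "w = 1"
    then have "cos (2 * pi * real_of_int d / real N) = 1" unfolding w_def
      by (metis complex.sel(1) cis.sel(1) one_complex.sel(1))
    then obtain k :: int where k: "2 * pi * real_of_int d / real N = real_of_int k * 2 * pi"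
      by (auto simp: cos_one_2pi_int)
    then have "real_of_int d = real_of_int k * real N" using N by (simp add: field_simps)
    then have dk: "d = k * int N" by (metis of_int_eq_iff of_int_mult of_int_of_nat_eq)
    show False
    proof (cases "k = 0")
      case True then show False using dk d0 by simp
    next
      case False
      then have "\<bar>k\<bar> \<ge> 1" by simp
      then have "\<bar>d\<bar> \<ge> int N" unfolding dk abs_mult using N by (simp add: mult_le_cancel_right1)
      then show False using dN by simp
    qed
  qed
  have "(\<Sum>j<N. cis (2 * pi * real j * real_of_int d / real N)) = (\<Sum>j<N. w ^ j)"
    by (simp add: pw)
  also have "\<dots> = 0" using geometric_sum[OF w1, of N] wN by simp
  finally show ?thesis .
qed

lemma gN_pos: "0 < gN m" by (simp add: gN_def)

lemma gh_sq: "gh m ^ 2 * real (gN m) = 1"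
proof -
  have "((2::real)^m) ^ 2 = (2^2)^m" by (simp only: power_mult[symmetric] mult.commute)
  then have "((2::real)^m) ^ 2 = 4^m" by simp
  then show ?thesis by (simp add: gh_def gN_def power_mult power_divide)
qed

lemma orth_sum:
  assumes l: "l < gN m" and l': "l' < gN m"
  shows "(\<Sum>j<gN m. cis (2 * pi * (xi m l' - xi m l) * omega m j)) = (if l = l' then of_nat (gN m) else 0)"
proof (cases "l = l'")
  case True then show ?thesis by simp
next
  case False
  define N where "N = gN m"
  define d where "d = int l' - int l"
  have N: "0 < N" unfolding N_def by (rule gN_pos)
  have d0: "d \<noteq> 0" using False unfolding d_def by simp
  have dN: "\<bar>d\<bar> < int N" using l l' unfolding d_def N_def by auto
  have hN: "gh m ^ 2 = 1 / real N" using gh_sq[of m] N unfolding N_def by (simp add: field_simps)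
  have th: "2 * pi * (xi m l' - xi m l) * omega m j = 2 * pi * real j * real_of_int d / real N + (- pi * real_of_int d)" for j
  proof -
    have "2 * pi * (xi m l' - xi m l) * omega m j = 2 * pi * real_of_int d * (real j - real N / 2) * gh m ^ 2"
      unfolding xi_def omega_def d_def N_def by (simp add: power2_eq_square algebra_simps)
    also have "\<dots> = 2 * pi * real j * real_of_int d / real N + (- pi * real_of_int d)"
      unfolding hN using N by (simp add: field_simps)
    finally show ?thesis .
  qed
  have "(\<Sum>j<gN m. cis (2 * pi * (xi m l' - xi m l) * omega m j)) = (\<Sum>j<N. cis (2 * pi * real j * real_of_int d / real N)) * cis (- pi * real_of_int d)"
    unfolding th N_def by (simp add: cis_mult sum_distrib_right)
  also have "\<dots> = 0" using cis_orth[OF N d0 dN] by simp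
  finally show ?thesis using False by simp
qed

definition cc :: "nat \<Rightarrow> nat \<Rightarrow> complex" where
  "cc m l = 2 * pi * \<i> * complex_of_real (xi m l)"

definition uu :: "nat \<Rightarrow> real \<Rightarrow> nat \<Rightarrow> nat \<Rightarrow> complex" where
  "uu m \<gamma> j l = complex_of_real (gh m powr (3/2) / gC m \<gamma>) * complex_of_real (ghat \<gamma> (xi m l)) * exp (cc m l * complex_of_real (omega m j))"

lemma kraus_comb:
  assumes Ob: "Ob \<in> carrier_mat n n"
  shows "kraus n Ob 1 m \<gamma> j = comb n Ob (uu m \<gamma> j) (\<lambda>l. - cc m l) {1..<gN m}"
proof (rule eq_matI)
  fix a b assume "a < dim_row (comb n Ob (uu m \<gamma> j) (\<lambda>l. - cc m l) {1..<gN m})" "b < dim_col (comb n Ob (uu m \<gamma> j) (\<lambda>l. - cc m l) {1..<gN m})"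
  then have a: "a < n" and b: "b < n" by auto
  have M: "(2 * pi * \<i> * complex_of_real (xi m l)) \<cdot>\<^sub>m (complex_of_real (omega m j) \<cdot>\<^sub>m 1\<^sub>m n + (- complex_of_real (1 / 1)) \<cdot>\<^sub>m Ob)
      = (cc m l * complex_of_real (omega m j)) \<cdot>\<^sub>m 1\<^sub>m n + (- cc m l) \<cdot>\<^sub>m Ob" for l
    using Ob unfolding cc_def by (intro eq_matI) (auto simp: algebra_simps)
  have E: "mexp ((2 * pi * \<i> * complex_of_real (xi m l)) \<cdot>\<^sub>m (complex_of_real (omega m j) \<cdot>\<^sub>m 1\<^sub>m n + (- complex_of_real (1 / 1)) \<cdot>\<^sub>m Ob)) $$ (a,b)
      = exp (cc m l * complex_of_real (omega m j)) * Eop Ob (- cc m l) $$ (a,b)" for l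
    unfolding M using Ob a b by (simp add: mexp_shift[of "(- cc m l) \<cdot>\<^sub>m Ob" n] Eop_def)
  have "kraus n Ob 1 m \<gamma> j $$ (a,b) = complex_of_real (gh m powr (3/2) / gC m \<gamma>) *
     (\<Sum>l\<in>{1..<gN m}.
        complex_of_real (ghat \<gamma> (xi m l)) *
        mexp ((2 * pi * \<i> * complex_of_real (xi m l)) \<cdot>\<^sub>m
              (complex_of_real (omega m j) \<cdot>\<^sub>m 1\<^sub>m n + (- complex_of_real (1 / 1)) \<cdot>\<^sub>m Ob)) $$ (a, b))"
    unfolding kraus_def by (subst index_mat(1)) (use a b in auto)
  also have "\<dots> = complex_of_real (gh m powr (3/2) / gC m \<gamma>) *
     (\<Sum>l\<in>{1..<gN m}. complex_of_real (ghat \<gamma> (xi m l)) * (exp (cc m l * complex_of_real (omega m j)) * Eop Ob (- cc m l) $$ (a,b)))"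
    unfolding E ..
  also have "\<dots> = comb n Ob (uu m \<gamma> j) (\<lambda>l. - cc m l) {1..<gN m} $$ (a,b)"
    using a b Ob by (simp add: comb_idx uu_def sum_distrib_left mult_ac del: of_real_divide)
  finally show "kraus n Ob 1 m \<gamma> j $$ (a,b) = comb n Ob (uu m \<gamma> j) (\<lambda>l. - cc m l) {1..<gN m} $$ (a,b)" .
qed (use Ob in \<open>auto simp: kraus_def\<close>)

lemma exp_cc: "exp (cc m l * complex_of_real w) = cis (2 * pi * xi m l * w)"
  unfolding cc_def by (simp add: cis_conv_exp mult_ac)

lemma uu_orth:
  assumes l: "l < gN m" and l': "l' < gN m"
  shows "(\<Sum>j<gN m. cnj (uu m \<gamma> j l) * uu m \<gamma> j l') =
    (if l = l' then complex_of_real ((gh m powr (3/2) / gC m \<gamma> * ghat \<gamma> (xi m l))\<^sup>2 * real (gN m)) else 0)"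
proof -
  define s where "s = gh m powr (3/2) / gC m \<gamma>"
  have t: "cnj (uu m \<gamma> j l) * uu m \<gamma> j l' = complex_of_real (s * ghat \<gamma> (xi m l) * (s * ghat \<gamma> (xi m l'))) * cis (2 * pi * (xi m l' - xi m l) * omega m j)" for j
  proof -
    have "cnj (uu m \<gamma> j l) * uu m \<gamma> j l' = complex_of_real (s * ghat \<gamma> (xi m l) * (s * ghat \<gamma> (xi m l'))) * (cis (- (2 * pi * xi m l * omega m j)) * cis (2 * pi * xi m l' * omega m j))"
      unfolding uu_def s_def exp_cc by (simp add: cis_cnj mult_ac)
    also have "cis (- (2 * pi * xi m l * omega m j)) * cis (2 * pi * xi m l' * omega m j) = cis (2 * pi * (xi m l' - xi m l) * omega m j)"
      by (simp add: cis_mult algebra_simps)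
    finally show ?thesis .
  qed
  have "(\<Sum>j<gN m. cnj (uu m \<gamma> j l) * uu m \<gamma> j l') = complex_of_real (s * ghat \<gamma> (xi m l) * (s * ghat \<gamma> (xi m l'))) * (\<Sum>j<gN m. cis (2 * pi * (xi m l' - xi m l) * omega m j))"
    unfolding t by (simp add: sum_distrib_left)
  also have "\<dots> = (if l = l' then complex_of_real ((s * ghat \<gamma> (xi m l))\<^sup>2 * real (gN m)) else 0)"
    unfolding orth_sum[OF l l'] by (simp add: power2_eq_square)
  finally show ?thesis unfolding s_def .
qed

lemma ghat_pos: "\<gamma> > 0 \<Longrightarrow> ghat \<gamma> x > 0"
  unfolding ghat_def by (intro mult_pos_pos) auto

lemma weights_sum:
  assumes m: "m > 0" and g: "\<gamma> > 0"
  shows "(\<Sum>l\<in>{1..<gN m}. (gh m powr (3/2) / gC m \<gamma> * ghat \<gamma> (xi m l))\<^sup>2 * real (gN m)) = 1"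
proof -
  define h where "h = gh m"
  define G where "G = (\<Sum>l\<in>{1..<gN m}. (ghat \<gamma> (xi m l))\<^sup>2)"
  have h0: "h > 0" unfolding h_def gh_def by simp
  have "(2::nat)^2 \<le> 2^(2*m)" using m by (intro power_increasing) auto
  then have "gN m \<ge> 4" unfolding gN_def by simp
  then have "1 \<in> {1..<gN m}" by auto
  then have G0: "G > 0" unfolding G_def
    using ghat_pos[OF g] ghat_pos[OF g, THEN less_imp_neq, THEN not_sym] by (intro sum_pos2[of _ 1]) auto
  have C2: "(gC m \<gamma>)\<^sup>2 = h * G" unfolding gC_def h_def[symmetric] G_def[symmetric]
    using h0 G0 by simp
  have p: "(h powr (3/2))\<^sup>2 = h^3" using h0 by (simp add: power2_eq_square powr_add[symmetric])
  have "(\<Sum>l\<in>{1..<gN m}. (gh m powr (3/2) / gC m \<gamma> * ghat \<gamma> (xi m l))\<^sup>2 * real (gN m))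
      = (h powr (3/2))\<^sup>2 / (gC m \<gamma>)\<^sup>2 * real (gN m) * G"
    unfolding G_def h_def by (simp add: sum_distrib_left sum_distrib_right sum_divide_distrib power_mult_distrib power_divide mult_ac)
  also have "\<dots> = h^2 * real (gN m)" unfolding p C2 using h0 G0 by (simp add: field_simps power2_eq_square power3_eq_cube)
  also have "\<dots> = 1" unfolding h_def by (rule gh_sq)
  finally show ?thesis .
qed

lemma if_zero_mult: "(if P then x else 0) * (y::complex) = (if P then x * y else 0)"
  by simp

lemma sumP:
  assumes Ob: "Ob \<in> carrier_mat n n" and h: "dagger Ob = Ob" and m: "m > 0" and g: "\<gamma> > 0"
  shows "msum n (\<lambda>j. dagger (kraus n Ob 1 m \<gamma> j) * kraus n Ob 1 m \<gamma> j) {..<gN m} = 1\<^sub>m n"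
proof (rule eq_matI)
  fix a b assume "a < dim_row (1\<^sub>m n)" "b < dim_col (1\<^sub>m n)"
  then have a: "a < n" and b: "b < n" by auto
  define L where "L = {1..<gN m}"
  define w where "w l = (gh m powr (3/2) / gC m \<gamma> * ghat \<gamma> (xi m l))\<^sup>2 * real (gN m)" for l
  define f where "f j l l' = cnj (uu m \<gamma> j l) * uu m \<gamma> j l' * Eop Ob (cnj (- cc m l) + - cc m l') $$ (a,b)" for j l l'
  have P: "dagger (kraus n Ob 1 m \<gamma> j) * kraus n Ob 1 m \<gamma> j = comb n Ob (\<lambda>l. cnj (uu m \<gamma> j l)) (\<lambda>l. cnj (- cc m l)) L * comb n Ob (uu m \<gamma> j) (\<lambda>l. - cc m l) L" for j
    unfolding kraus_comb[OF Ob] L_def dagger_comb[OF Ob h] ..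
  have "msum n (\<lambda>j. dagger (kraus n Ob 1 m \<gamma> j) * kraus n Ob 1 m \<gamma> j) {..<gN m} $$ (a,b) = (\<Sum>j<gN m. \<Sum>l\<in>L. \<Sum>l'\<in>L. f j l l')"
    using a b unfolding f_def by (simp add: P comb_mult_idx[OF Ob a b])
  also have "\<dots> = (\<Sum>l\<in>L. \<Sum>j<gN m. \<Sum>l'\<in>L. f j l l')" by (rule sum.swap)
  also have "\<dots> = (\<Sum>l\<in>L. \<Sum>l'\<in>L. \<Sum>j<gN m. f j l l')" by (intro sum.cong refl sum.swap)
  also have "\<dots> = (\<Sum>l\<in>L. \<Sum>l'\<in>L. (\<Sum>j<gN m. cnj (uu m \<gamma> j l) * uu m \<gamma> j l') * Eop Ob (cnj (- cc m l) + - cc m l') $$ (a,b))"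
    unfolding f_def by (simp add: sum_distrib_right)
  also have "\<dots> = (\<Sum>l\<in>L. \<Sum>l'\<in>L. (if l = l' then complex_of_real (w l) else 0) * Eop Ob (cnj (- cc m l) + - cc m l') $$ (a,b))"
    unfolding w_def L_def by (intro sum.cong refl) (simp add: uu_orth)
  also have "\<dots> = (\<Sum>l\<in>L. complex_of_real (w l) * Eop Ob (cnj (- cc m l) + - cc m l) $$ (a,b))"
    unfolding if_zero_mult by (simp add: L_def)
  also have "\<dots> = (\<Sum>l\<in>L. complex_of_real (w l)) * 1\<^sub>m n $$ (a,b)"
    using a b by (simp add: cc_def Eop_zero[OF Ob] sum_distrib_right)
  also have "(\<Sum>l\<in>L. complex_of_real (w l)) = 1"
    using weights_sum[OF m g] unfolding L_def w_def by (metis of_real_1 of_real_sum)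
  finally show "msum n (\<lambda>j. dagger (kraus n Ob 1 m \<gamma> j) * kraus n Ob 1 m \<gamma> j) {..<gN m} $$ (a,b) = 1\<^sub>m n $$ (a,b)" by simp
qed auto

lemma ctrace_idx:
  assumes "A \<in> carrier_mat n m" "B \<in> carrier_mat m n"
  shows "ctrace (A * B) = (\<Sum>i<n. \<Sum>l<m. A $$ (i,l) * B $$ (l,i))"
  using assms unfolding ctrace_def by (auto simp del: index_mult_mat simp: index_mult_mat(2,3) mult_idx intro!: sum.cong)

lemma ctrace_comm:
  assumes "A \<in> carrier_mat n m" "B \<in> carrier_mat m n"
  shows "ctrace (A * B) = ctrace (B * A)"
  unfolding ctrace_idx[OF assms] ctrace_idx[OF assms(2,1)]
  by (subst sum.swap) (simp add: mult.commute)

lemma ctrace_smult: "A \<in> carrier_mat n n \<Longrightarrow> ctrace (c \<cdot>\<^sub>m A) = c * ctrace A"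
  unfolding ctrace_def by (auto simp: sum_distrib_left)

lemma trace_sandwich:
  assumes M: "M \<in> carrier_mat n n" and R: "R \<in> carrier_mat n n"
  shows "ctrace (M * R * dagger M) = ctrace (R * (dagger M * M))"
proof -
  have "ctrace (M * R * dagger M) = ctrace (dagger M * (M * R))"
    using M R by (intro ctrace_comm[of _ n n]) auto
  also have "dagger M * (M * R) = (dagger M * M) * R" using M R by (subst assoc_mult_mat[of _ n n _ n _ n]) auto
  also have "ctrace \<dots> = ctrace (R * (dagger M * M))"
    using M R by (intro ctrace_comm[of _ n n]) auto
  finally show ?thesis .
qed

lemma psd_trace:
  assumes R: "density_mat n R" and X: "X \<in> carrier_mat n n"
  shows "0 \<le> Re (ctrace (R * (dagger X * X)))"
proof -
  have Rc: "R \<in> carrier_mat n n" using R unfolding density_mat_def hermitian_mat_def by auto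
  have q: "\<And>v. v \<in> carrier_vec n \<Longrightarrow> 0 \<le> Re (\<Sum>i<n. \<Sum>j<n. cnj (v $ i) * R $$ (i, j) * v $ j)"
    using R unfolding density_mat_def by auto
  have "ctrace (R * (dagger X * X)) = ctrace (X * R * dagger X)"
    using trace_sandwich[OF X Rc] by simp
  also have "\<dots> = (\<Sum>i<n. \<Sum>l<n. (X * R) $$ (i,l) * cnj (X $$ (i,l)))"
    using X Rc by (subst ctrace_idx[of _ n n]) auto
  also have "\<dots> = (\<Sum>i<n. \<Sum>l<n. \<Sum>b<n. X $$ (i,b) * R $$ (b,l) * cnj (X $$ (i,l)))"
    using X Rc by (intro sum.cong refl) (simp del: index_mult_mat add: index_mult_mat(2,3) mult_idx[of _ n n _ n] sum_distrib_right)
  also have "\<dots> = (\<Sum>i<n. \<Sum>b<n. \<Sum>l<n. X $$ (i,b) * R $$ (b,l) * cnj (X $$ (i,l)))"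
    by (intro sum.cong refl sum.swap)
  finally have eq: "ctrace (R * (dagger X * X)) = (\<Sum>i<n. \<Sum>b<n. \<Sum>l<n. X $$ (i,b) * R $$ (b,l) * cnj (X $$ (i,l)))" .
  have nn: "0 \<le> Re (\<Sum>b<n. \<Sum>l<n. X $$ (i,b) * R $$ (b,l) * cnj (X $$ (i,l)))" if "i < n" for i
  proof -
    define v where "v = vec n (\<lambda>a. cnj (X $$ (i,a)))"
    have "(\<Sum>b<n. \<Sum>l<n. cnj (v $ b) * R $$ (b,l) * v $ l) = (\<Sum>b<n. \<Sum>l<n. X $$ (i,b) * R $$ (b,l) * cnj (X $$ (i,l)))"
      unfolding v_def by (intro sum.cong refl) auto
    moreover have "v \<in> carrier_vec n" unfolding v_def by simp
    ultimately show ?thesis using q[of v] by simp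
  qed
  have "0 \<le> (\<Sum>i<n. Re (\<Sum>b<n. \<Sum>l<n. X $$ (i,b) * R $$ (b,l) * cnj (X $$ (i,l))))"
    by (rule sum_nonneg) (use nn in auto)
  then show ?thesis unfolding eq by (simp only: Re_sum[of _ "{..<n}"])
qed

lemma ctrace_msum:
  assumes R: "R \<in> carrier_mat n n" and F: "\<And>i. i \<in> I \<Longrightarrow> f i \<in> carrier_mat n n"
  shows "ctrace (R * msum n f I) = (\<Sum>i\<in>I. ctrace (R * f i))"
proof -
  have "ctrace (R * msum n f I) = (\<Sum>a<n. \<Sum>b<n. R $$ (a,b) * (\<Sum>i\<in>I. f i $$ (b,a)))"
    using R by (subst ctrace_idx[of _ n n]) auto
  also have "\<dots> = (\<Sum>a<n. \<Sum>i\<in>I. \<Sum>b<n. R $$ (a,b) * f i $$ (b,a))"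
    by (simp add: sum_distrib_left) (intro sum.cong refl sum.swap)
  also have "\<dots> = (\<Sum>i\<in>I. \<Sum>a<n. \<Sum>b<n. R $$ (a,b) * f i $$ (b,a))" by (rule sum.swap)
  also have "\<dots> = (\<Sum>i\<in>I. ctrace (R * f i))"
    using R F by (intro sum.cong refl) (simp add: ctrace_idx[of _ n n])
  finally show ?thesis .
qed

lemma scalar_core:
  fixes p r :: "nat \<Rightarrow> real" and q :: "nat \<Rightarrow> nat \<Rightarrow> real" and N :: nat
  assumes qnn: "\<And>j k. j < N \<Longrightarrow> k < N \<Longrightarrow> 0 \<le> q j k"
    and qsym: "\<And>j k. j < N \<Longrightarrow> k < N \<Longrightarrow> q j k = q k j"
    and qsum: "\<And>j. j < N \<Longrightarrow> (\<Sum>k<N. q j k) = p j"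
    and psum: "(\<Sum>j<N. p j) = 1"
    and psd: "\<And>x. 0 \<le> (\<Sum>j<N. \<Sum>k<N. x j * x k * q j k)"
  shows "\<bar>(\<Sum>j<N. \<Sum>k<N. q j k * r j * r k) - (\<Sum>j<N. p j * r j) * (\<Sum>j<N. \<Sum>k<N. q j k * r k)\<bar>
     \<le> (\<Sum>j<N. p j * (r j)\<^sup>2) - (\<Sum>j<N. p j * r j)\<^sup>2"
proof -
  define e where "e = (\<Sum>j<N. p j * r j)"
  define Z2 where "Z2 = (\<Sum>j<N. \<Sum>k<N. q j k * r j * r k)"
  have swapq: "(\<Sum>j<N. \<Sum>k<N. q j k * f k) = (\<Sum>j<N. \<Sum>k<N. q j k * f j)" for f :: "nat \<Rightarrow> real"
  proof -
    have "(\<Sum>j<N. \<Sum>k<N. q j k * f k) = (\<Sum>k<N. \<Sum>j<N. q j k * f k)" by (rule sum.swap)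
    also have "\<dots> = (\<Sum>k<N. \<Sum>j<N. q k j * f k)" using qsym by (intro sum.cong refl) auto
    finally show ?thesis .
  qed
  have rowq: "(\<Sum>j<N. \<Sum>k<N. q j k * f j) = (\<Sum>j<N. p j * f j)" for f :: "nat \<Rightarrow> real"
  proof (intro sum.cong refl)
    fix j assume "j \<in> {..<N}"
    then have "(\<Sum>k<N. q j k) = p j" using qsum by auto
    then show "(\<Sum>k<N. q j k * f j) = p j * f j" by (simp add: sum_distrib_right[symmetric])
  qed
  have E': "(\<Sum>j<N. \<Sum>k<N. q j k * r k) = e" unfolding e_def swapq rowq ..
  have A1: "(\<Sum>j<N. \<Sum>k<N. q j k * r j) = e" unfolding e_def rowq ..
  have A0: "(\<Sum>j<N. \<Sum>k<N. q j k) = 1" using rowq[of "\<lambda>_. 1"] psum by simp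
  have cov: "Z2 - e * e = (\<Sum>j<N. \<Sum>k<N. (r j - e) * (r k - e) * q j k)"
  proof -
    have "(\<Sum>j<N. \<Sum>k<N. (r j - e) * (r k - e) * q j k) = (\<Sum>j<N. \<Sum>k<N. q j k * r j * r k - e * (q j k * r j) - e * (q j k * r k) + e * e * q j k)"
      by (intro sum.cong refl) (simp add: algebra_simps)
    also have "\<dots> = Z2 - e * (\<Sum>j<N. \<Sum>k<N. q j k * r j) - e * (\<Sum>j<N. \<Sum>k<N. q j k * r k) + e * e * (\<Sum>j<N. \<Sum>k<N. q j k)"
      unfolding Z2_def by (simp add: sum.distrib sum_subtractf sum_distrib_left)
    finally show ?thesis unfolding A1 E' A0 by simp
  qed
  have cov0: "0 \<le> Z2 - e * e" unfolding cov using psd[of "\<lambda>j. r j - e"] .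
  have S1: "(\<Sum>j<N. p j * (r j)\<^sup>2) = (\<Sum>j<N. \<Sum>k<N. q j k * (r j)\<^sup>2)" using rowq[of "\<lambda>j. (r j)\<^sup>2"] by simp
  have S2: "(\<Sum>j<N. p j * (r j)\<^sup>2) = (\<Sum>j<N. \<Sum>k<N. q j k * (r k)\<^sup>2)" unfolding S1 swapq ..
  have "2 * ((\<Sum>j<N. p j * (r j)\<^sup>2) - Z2) = (\<Sum>j<N. \<Sum>k<N. q j k * (r j - r k)\<^sup>2)"
  proof -
    have "(\<Sum>j<N. \<Sum>k<N. q j k * (r j - r k)\<^sup>2) = (\<Sum>j<N. \<Sum>k<N. q j k * (r j)\<^sup>2 + q j k * (r k)\<^sup>2 - 2 * (q j k * r j * r k))"
      by (intro sum.cong refl) (simp add: algebra_simps power2_eq_square)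
    also have "\<dots> = (\<Sum>j<N. \<Sum>k<N. q j k * (r j)\<^sup>2) + (\<Sum>j<N. \<Sum>k<N. q j k * (r k)\<^sup>2) - 2 * Z2"
      unfolding Z2_def by (simp add: sum.distrib sum_subtractf sum_distrib_left)
    finally show ?thesis using S1 S2 by simp
  qed
  moreover have "0 \<le> (\<Sum>j<N. \<Sum>k<N. q j k * (r j - r k)\<^sup>2)"
    using qnn by (intro sum_nonneg) auto
  ultimately have v: "Z2 \<le> (\<Sum>j<N. p j * (r j)\<^sup>2)" by simp
  show ?thesis
    unfolding E' Z2_def[symmetric] e_def[symmetric] using cov0 v by (simp add: power2_eq_square)
qed

lemma mult_msum_left:
  assumes A: "A \<in> carrier_mat n n" and F: "\<And>i. i \<in> I \<Longrightarrow> f i \<in> carrier_mat n n"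
  shows "A * msum n f I = msum n (\<lambda>i. A * f i) I"
proof (rule eq_matI)
  fix a b assume "a < dim_row (msum n (\<lambda>i. A * f i) I)" "b < dim_col (msum n (\<lambda>i. A * f i) I)"
  then have a: "a < n" and b: "b < n" by auto
  have "(A * msum n f I) $$ (a,b) = (\<Sum>l<n. A $$ (a,l) * (\<Sum>i\<in>I. f i $$ (l,b)))"
    using A a b by (subst mult_idx[of _ n n _ n]) auto
  also have "\<dots> = (\<Sum>i\<in>I. \<Sum>l<n. A $$ (a,l) * f i $$ (l,b))"
    by (simp add: sum_distrib_left) (rule sum.swap)
  also have "\<dots> = msum n (\<lambda>i. A * f i) I $$ (a,b)"
    using A F a b by (simp del: index_mult_mat add: index_mult_mat(2,3) mult_idx[of _ n n _ n])
  finally show "(A * msum n f I) $$ (a,b) = msum n (\<lambda>i. A * f i) I $$ (a,b)" .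
qed (use A in auto)

lemma msum_mult_right:
  assumes A: "A \<in> carrier_mat n n" and F: "\<And>i. i \<in> I \<Longrightarrow> f i \<in> carrier_mat n n"
  shows "msum n f I * A = msum n (\<lambda>i. f i * A) I"
proof (rule eq_matI)
  fix a b assume "a < dim_row (msum n (\<lambda>i. f i * A) I)" "b < dim_col (msum n (\<lambda>i. f i * A) I)"
  then have a: "a < n" and b: "b < n" by auto
  have "(msum n f I * A) $$ (a,b) = (\<Sum>l<n. (\<Sum>i\<in>I. f i $$ (a,l)) * A $$ (l,b))"
    using A a b by (subst mult_idx[of _ n n _ n]) auto
  also have "\<dots> = (\<Sum>i\<in>I. \<Sum>l<n. f i $$ (a,l) * A $$ (l,b))"
    by (simp add: sum_distrib_right) (rule sum.swap)
  also have "\<dots> = msum n (\<lambda>i. f i * A) I $$ (a,b)"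
    using A F a b by (simp del: index_mult_mat add: index_mult_mat(2,3) mult_idx[of _ n n _ n])
  finally show "(msum n f I * A) $$ (a,b) = msum n (\<lambda>i. f i * A) I $$ (a,b)" .
qed (use A in auto)

lemma dagger_msum:
  assumes F: "\<And>i. i \<in> I \<Longrightarrow> f i \<in> carrier_mat n n"
  shows "dagger (msum n f I) = msum n (\<lambda>i. dagger (f i)) I"
proof (rule eq_matI)
  fix i j assume "i < dim_row (msum n (\<lambda>i. dagger (f i)) I)" "j < dim_col (msum n (\<lambda>i. dagger (f i)) I)"
  then have i: "i < n" and j: "j < n" by auto
  have "cnj (f x $$ (j, i)) = dagger (f x) $$ (i, j)" if "x \<in> I" for x
    using F[OF that] i j by simp
  then show "dagger (msum n f I) $$ (i,j) = msum n (\<lambda>i. dagger (f i)) I $$ (i,j)"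
    using i j by (simp add: cnj_sum)
qed auto

theorem propositionD5:
  fixes n m :: nat and Obs \<rho> :: "complex mat" and \<gamma> :: real
  assumes "hermitian_mat n Obs"
    and "opnorm_le n Obs 1"
    and "m > 0"
    and "\<gamma> > 0"
    and "density_mat n \<rho>"
  shows "\<bar>CovZZ' n Obs 1 m \<gamma> \<rho>\<bar> \<le> VZ n Obs 1 m \<gamma> \<rho>"
proof -
  have Ob: "Obs \<in> carrier_mat n n" and h: "dagger Obs = Obs"
    using assms(1) unfolding hermitian_mat_def by auto
  have R: "\<rho> \<in> carrier_mat n n" and tr1: "ctrace \<rho> = 1"
    using assms(5) unfolding density_mat_def hermitian_mat_def by auto
  define N where "N = gN m"
  define L where "L = {1..<gN m}"
  define K where "K j = kraus n Obs 1 m \<gamma> j" for j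
  define P where "P j = dagger (K j) * K j" for j
  define phi where "phi X = Re (ctrace (\<rho> * X))" for X
  define q where "q j k = phi (P j * P k)" for j k
  define p where "p j = p1 n Obs 1 m \<gamma> \<rho> j" for j
  have Kc[simp]: "K j \<in> carrier_mat n n" for j unfolding K_def kraus_def by simp
  have Pc[simp]: "P j \<in> carrier_mat n n" for j unfolding P_def by (rule mult_carrier_mat[of _ n n]) simp_all
  have assoc: "\<And>A B C. A \<in> carrier_mat n n \<Longrightarrow> B \<in> carrier_mat n n \<Longrightarrow> C \<in> carrier_mat n n \<Longrightarrow> A * B * C = A * (B * C)"
    by (rule assoc_mult_mat) auto
  have mc[simp]: "\<And>A B. A \<in> carrier_mat n n \<Longrightarrow> B \<in> carrier_mat n n \<Longrightarrow> A * B \<in> carrier_mat n n"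
    by (rule mult_carrier_mat) auto
  have Kcomb: "K j = comb n Obs (uu m \<gamma> j) (\<lambda>l. - cc m l) L" for j
    unfolding K_def L_def by (rule kraus_comb[OF Ob])
  have Kdcomb: "dagger (K j) = comb n Obs (\<lambda>l. cnj (uu m \<gamma> j l)) (\<lambda>l. cnj (- cc m l)) L" for j
    unfolding Kcomb dagger_comb[OF Ob h] ..
  have Pcomb: "\<exists>x \<beta>. P j = comb n Obs x \<beta> (L \<times> L)" for j
    unfolding P_def Kdcomb unfolding Kcomb comb_mult[OF Ob] by blast
  have PK: "P k * K j = K j * P k" for j k
    using Pcomb[of k] Kcomb[of j] comb_comm[OF Ob] by metis
  have PP: "P j * P k = P k * P j" for j k
    using Pcomb[of k] Pcomb[of j] comb_comm[OF Ob] by metis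
  have Ph: "dagger (P j) = P j" for j
    unfolding P_def by (simp add: dagger_mult[of _ n n _ n])
  have sumP: "msum n P {..<N} = 1\<^sub>m n"
    unfolding P_def K_def N_def by (rule sumP[OF Ob h assms(3,4)])
  have phi_msum: "phi (msum n f I) = (\<Sum>i\<in>I. phi (f i))" if "\<And>i. i \<in> I \<Longrightarrow> f i \<in> carrier_mat n n" for f and I :: "'a set"
  proof -
    have "ctrace (\<rho> * msum n f I) = (\<Sum>i\<in>I. ctrace (\<rho> * f i))"
      by (rule ctrace_msum[OF R]) (rule that)
    then show ?thesis unfolding phi_def by (simp add: Re_sum)
  qed
  have phi_smult: "phi (complex_of_real c \<cdot>\<^sub>m X) = c * phi X" if "X \<in> carrier_mat n n" for c X
    unfolding phi_def using R that by (simp add: mult_smult_distrib[of _ n n _ n] ctrace_smult[of _ n])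
  have pP: "p j = phi (P j)" for j
    unfolding p_def p1_def outcome_prob_def phi_def P_def K_def[symmetric]
    using trace_sandwich[OF Kc R] by simp
  have DM: "dagger (K k * K j) * (K k * K j) = P j * P k" for j k
  proof -
    have "dagger (K k * K j) * (K k * K j) = dagger (K j) * (P k * K j)"
      unfolding P_def by (simp add: dagger_mult[of _ n n _ n] assoc)
    also have "\<dots> = dagger (K j) * (K j * P k)" by (simp add: PK)
    also have "\<dots> = P j * P k" unfolding P_def by (simp add: assoc)
    finally show ?thesis .
  qed
  have qnn: "0 \<le> q j k" for j k
    unfolding q_def phi_def DM[symmetric] by (rule psd_trace[OF assms(5)]) simp
  have qsym: "q j k = q k j" for j k unfolding q_def by (simp add: PP)
  have qsum: "(\<Sum>k<N. q j k) = p j" for j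
  proof -
    have "(\<Sum>k<N. q j k) = phi (msum n (\<lambda>k. P j * P k) {..<N})"
      unfolding q_def by (subst phi_msum) auto
    also have "msum n (\<lambda>k. P j * P k) {..<N} = P j * msum n P {..<N}"
      by (rule mult_msum_left[symmetric]) auto
    also have "\<dots> = P j" unfolding sumP by (rule right_mult_one_mat[OF Pc])
    finally show ?thesis by (simp add: pP)
  qed
  have psum: "(\<Sum>j<N. p j) = 1"
  proof -
    have "(\<Sum>j<N. p j) = phi (msum n P {..<N})" unfolding pP by (subst phi_msum) auto
    also have "\<dots> = 1" unfolding sumP phi_def using R tr1 by simp
    finally show ?thesis .
  qed
  have psd: "0 \<le> (\<Sum>j<N. \<Sum>k<N. x j * x k * q j k)" for x
  proof -
    define Y where "Y = msum n (\<lambda>j. complex_of_real (x j) \<cdot>\<^sub>m P j) {..<N}"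
    have Yc: "Y \<in> carrier_mat n n" unfolding Y_def by simp
    have Yh: "dagger Y = Y" unfolding Y_def by (subst dagger_msum) (auto simp: dagger_smult Ph)
    have "Y * Y = msum n (\<lambda>j. (complex_of_real (x j) \<cdot>\<^sub>m P j) * Y) {..<N}"
      unfolding Y_def by (rule msum_mult_right) auto
    then have "phi (Y * Y) = (\<Sum>j<N. phi ((complex_of_real (x j) \<cdot>\<^sub>m P j) * Y))"
      by (simp, subst phi_msum) (auto simp: Yc)
    also have "\<dots> = (\<Sum>j<N. \<Sum>k<N. x j * x k * q j k)"
    proof (intro sum.cong refl)
      fix j
      have "(complex_of_real (x j) \<cdot>\<^sub>m P j) * Y = msum n (\<lambda>k. (complex_of_real (x j) \<cdot>\<^sub>m P j) * (complex_of_real (x k) \<cdot>\<^sub>m P k)) {..<N}"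
        unfolding Y_def by (rule mult_msum_left) auto
      also have "\<dots> = msum n (\<lambda>k. complex_of_real (x j * x k) \<cdot>\<^sub>m (P j * P k)) {..<N}"
        by (simp add: mult_smult_assoc_mat[of _ n n _ n] mult_smult_distrib[of _ n n _ n] smult_smult_mat' mult.commute)
      finally have eqY: "(complex_of_real (x j) \<cdot>\<^sub>m P j) * Y = msum n (\<lambda>k. complex_of_real (x j * x k) \<cdot>\<^sub>m (P j * P k)) {..<N}" .
      show "phi ((complex_of_real (x j) \<cdot>\<^sub>m P j) * Y) = (\<Sum>k<N. x j * x k * q j k)"
        unfolding q_def eqY by (subst phi_msum) (auto simp del: of_real_mult simp: phi_smult intro!: sum.cong)
    qed
    finally have "phi (Y * Y) = (\<Sum>j<N. \<Sum>k<N. x j * x k * q j k)" .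
    moreover have "0 \<le> phi (dagger Y * Y)" unfolding phi_def by (rule psd_trace[OF assms(5) Yc])
    ultimately show ?thesis using Yh by simp
  qed
  have p12q: "p12 n Obs 1 m \<gamma> \<rho> j k = q j k" if kN: "k < N" for j k
  proof (cases "p j = 0")
    case True
    have "(\<Sum>k<N. q j k) = 0" using qsum True by simp
    then have "q j k = 0" using qnn kN by (simp add: sum_nonneg_eq_0_iff)
    moreover have "p12 n Obs 1 m \<gamma> \<rho> j k = 0" unfolding p12_def using True unfolding p_def by simp
    ultimately show ?thesis by simp
  next
    case False
    have pj: "Re (ctrace (K j * \<rho> * dagger (K j))) = p j"
      unfolding p_def p1_def K_def outcome_prob_def ..
    have "outcome_prob (K k) (post_state (K j) \<rho>) = Re (ctrace (K k * (complex_of_real (1 / p j) \<cdot>\<^sub>m (K j * \<rho> * dagger (K j))) * dagger (K k)))"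
      unfolding outcome_prob_def post_state_def pj ..
    also have "\<dots> = (1 / p j) * Re (ctrace ((K k * K j) * \<rho> * dagger (K k * K j)))"
      using R by (simp add: mult_smult_assoc_mat[of _ n n _ n] mult_smult_distrib[of _ n n _ n] ctrace_smult[of _ n] dagger_mult[of _ n n _ n] assoc)
    also have "ctrace ((K k * K j) * \<rho> * dagger (K k * K j)) = ctrace (\<rho> * (P j * P k))"
      using trace_sandwich[of "K k * K j" n \<rho>] R DM by simp
    finally show ?thesis unfolding p12_def p_def[symmetric] K_def[symmetric] q_def phi_def using False by simp
  qed
  have cov: "CovZZ' n Obs 1 m \<gamma> \<rho> = (\<Sum>j<N. \<Sum>k<N. q j k * readout m j * readout m k) - (\<Sum>j<N. p j * readout m j) * (\<Sum>j<N. \<Sum>k<N. q j k * readout m k)"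
    unfolding CovZZ'_def EZZ'_def EZ_def EZ'_def N_def[symmetric] p_def[symmetric]
    using p12q by (auto intro!: sum.cong arg_cong2[where f="(-)"] arg_cong2[where f="(*)"])
  have vz: "VZ n Obs 1 m \<gamma> \<rho> = (\<Sum>j<N. p j * (readout m j)\<^sup>2) - (\<Sum>j<N. p j * readout m j)\<^sup>2"
    unfolding VZ_def EZ_def N_def[symmetric] p_def[symmetric] ..
  show ?thesis unfolding cov vz
    by (rule scalar_core) (use qnn qsym qsum psum psd in auto)
qed

end
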